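(* Let $\lambda_{\min}>0$ and define $$t^*=\min_{k=0,1,\dots,K}\frac{1-\lambda_{\min}\,\mathbf{G}_{k,:}\mathbf{C}^{-1}\mathbf{F}\mathbf{1}}{\mathbf{G}_{k,:}\mathbf{C}^{-1}\tilde{\mathbf{h}}}.$$ If $t^*\ge 0$, then $t^*$ is the optimal value of problem (P). If $t^*<0$, then (P) is infeasible (the network cannot support per-UE arrival rate $\lambda_{\min}$).
   Context: Consider a rooted tree whose root is the donor (vertex $0$), whose other internal vertices are IAB nodes $1,\dots,K$, and whose leaves are $M$ user equipments (UEs); vertices $0,\dots,K$ are called base stations (BSs), and every BS has at least one child. Every non-root vertex $v$ has a unique parent, and the edge from its parent to $v$ is indexed by $v$; let $\mathcal{E}$ be the set of edges. For each UE $m$, $\mathsf{R}(m)$ is the set of edges on the path from $0$ to $m$, and $h_m=|\mathsf{R}(m)|$. The routing matrix $\mathbf{F}\in\{0,1\}^{|\mathcal{E}|\times M}$ has $F_{v,m}=1$ iff $v\in\mathsf{R}(m)$. Let $\mathbf{C}=\mathrm{diag}(c_v)_{v\in\mathcal{E}}$ with all $c_v>0$. Let $\mathbf{G}\in\{0,1\}^{(K+1)\times|\mathcal{E}|}$ (rows indexed by BSs $0,\dots,K$) be a scheduling matrix in which every row and every column contains at least one $1$ (e.g. the half-duplex matrix $\mathbf{G}_{\mathrm{HD}}$ with $[\mathbf{G}_{\mathrm{HD}}]_{k,v}=1$ iff BS $k$ is the parent or the child of edge $v$, or the full-duplex matrix $\mathbf{G}_{\mathrm{FD}}$ with $[\mathbf{G}_{\mathrm{FD}}]_{k,v}=1$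 iff BS $k$ is the parent of edge $v$). $\mathbf{G}_{k,:}$ denotes the row of $\mathbf{G}$ for BS $k$; $\mathbf{1}$ denotes the all-ones vector. The vector $\tilde{\mathbf{h}}\in\mathbb{R}^{|\mathcal{E}|}$ is defined by $\tilde h_v=\max\{h_m: v\in\mathsf{R}(m)\}$. Problem (P): maximize $t$ over $(t,\boldsymbol{\lambda},\boldsymbol{\mu})\in\mathbb{R}\times\mathbb{R}^M\times\mathbb{R}^{|\mathcal{E}|}$ subject to $\boldsymbol{\lambda}\ge\lambda_{\min}\mathbf{1}$, $\mathbf{0}\le\boldsymbol{\mu}\le\mathbf{1}$, $t\ge0$, $\mathbf{G}\boldsymbol{\mu}\le\mathbf{1}$ (all componentwise), and $c_v\mu_v-(\mathbf{F}\boldsymbol{\lambda})_v\ge t\,h_m$ for every UE $m$ and every edge $v\in\mathsf{R}(m)$. *)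

theory Defs
  imports Main "HOL-Library.FuncSet" Complex_Main
begin

text \<open>Vertex labelling convention: BSs are 0..K (0 = donor), UEs are K+1..K+M.
  The tree is given by a parent map p; the edge from p v to v is indexed by v,
  so the edge set is {1..K+M}.\<close>

definition BSs :: "nat \<Rightarrow> nat set" where "BSs K = {0..K}"
definition UEs :: "nat \<Rightarrow> nat \<Rightarrow> nat set" where "UEs K M = {K+1..K+M}"
definition edges :: "nat \<Rightarrow> nat \<Rightarrow> nat set" where "edges K M = {1..K+M}"

definition is_IAB_tree :: "nat \<Rightarrow> nat \<Rightarrow> (nat \<Rightarrow> nat) \<Rightarrow> bool" where
  "is_IAB_tree K M p \<longleftrightarrow>
     (\<forall>v\<in>edges K M. p v \<in> BSs K) \<and>
     (\<forall>v\<in>{0..K+M}. \<exists>n. (p ^^ n) v = 0) \<and>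
     (\<forall>k\<in>BSs K. \<exists>v\<in>edges K M. p v = k)"

definition hopdist :: "(nat \<Rightarrow> nat) \<Rightarrow> nat \<Rightarrow> nat" where
  "hopdist p m = (LEAST n. (p ^^ n) m = 0)"

definition route :: "(nat \<Rightarrow> nat) \<Rightarrow> nat \<Rightarrow> nat set" where
  "route p m = {(p ^^ i) m | i. i < hopdist p m}"

definition hcnt :: "(nat \<Rightarrow> nat) \<Rightarrow> nat \<Rightarrow> real" where
  "hcnt p m = real (card (route p m))"

definition Fmat :: "(nat \<Rightarrow> nat) \<Rightarrow> nat \<Rightarrow> nat \<Rightarrow> real" where
  "Fmat p v m = (if v \<in> route p m then 1 else 0)"

definition Fmul :: "nat \<Rightarrow> nat \<Rightarrow> (nat \<Rightarrow> nat) \<Rightarrow> (nat \<Rightarrow> real) \<Rightarrow> nat \<Rightarrow> real" where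
  "Fmul K M p lam v = (\<Sum>m\<in>UEs K M. Fmat p v m * lam m)"

definition htilde :: "nat \<Rightarrow> nat \<Rightarrow> (nat \<Rightarrow> nat) \<Rightarrow> nat \<Rightarrow> real" where
  "htilde K M p v = Max {hcnt p m | m. m \<in> UEs K M \<and> v \<in> route p m}"

text \<open>Feasibility for problem (P); G k v is the (k,v) entry of the scheduling matrix,
  c v the diagonal entry of C.\<close>
definition feasibleP ::
  "nat \<Rightarrow> nat \<Rightarrow> (nat \<Rightarrow> nat) \<Rightarrow> (nat \<Rightarrow> real) \<Rightarrow> (nat \<Rightarrow> nat \<Rightarrow> real) \<Rightarrow> real
   \<Rightarrow> real \<Rightarrow> (nat \<Rightarrow> real) \<Rightarrow> (nat \<Rightarrow> real) \<Rightarrow> bool" where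
  "feasibleP K M p c G lmin t lam mu \<longleftrightarrow>
     (\<forall>m\<in>UEs K M. lam m \<ge> lmin) \<and>
     (\<forall>v\<in>edges K M. 0 \<le> mu v \<and> mu v \<le> 1) \<and>
     t \<ge> 0 \<and>
     (\<forall>k\<in>BSs K. (\<Sum>v\<in>edges K M. G k v * mu v) \<le> 1) \<and>
     (\<forall>m\<in>UEs K M. \<forall>v\<in>route p m. c v * mu v - Fmul K M p lam v \<ge> t * hcnt p m)"

definition tstar ::
  "nat \<Rightarrow> nat \<Rightarrow> (nat \<Rightarrow> nat) \<Rightarrow> (nat \<Rightarrow> real) \<Rightarrow> (nat \<Rightarrow> nat \<Rightarrow> real) \<Rightarrow> real \<Rightarrow> real" where
  "tstar K M p c G lmin =
     Min ((\<lambda>k. (1 - lmin * (\<Sum>v\<in>edges K M. G k v * (1 / c v) * Fmul K M p (\<lambda>_. 1) v))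
              / (\<Sum>v\<in>edges K M. G k v * (1 / c v) * htilde K M p v)) ` BSs K)"

end

theory Submission
  imports Defs
begin

lemma hop_ex:
  assumes tree: "is_IAB_tree K M p" and m: "m \<in> UEs K M"
  shows "\<exists>n. (p ^^ n) m = 0"
  using tree m unfolding is_IAB_tree_def UEs_def by auto

lemma in_route:
  assumes tree: "is_IAB_tree K M p" and m: "m \<in> UEs K M"
    and nz: "\<forall>j\<le>n. (p ^^ j) m \<noteq> 0"
  shows "(p ^^ n) m \<in> route p m"
proof -
  have "n < hopdist p m"
  proof (rule ccontr)
    assume "\<not> n < hopdist p m"
    hence "hopdist p m \<le> n" by simp
    moreover have "(p ^^ hopdist p m) m = 0"
      unfolding hopdist_def using hop_ex[OF tree m] by (rule LeastI_ex)
    ultimately show False using nz by auto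
  qed
  thus ?thesis unfolding route_def by auto
qed

lemma route_edges:
  assumes tree: "is_IAB_tree K M p" and m: "m \<in> UEs K M"
  shows "route p m \<subseteq> edges K M"
proof -
  have "\<forall>i. i < hopdist p m \<longrightarrow> (p ^^ i) m \<in> edges K M"
  proof
    fix i show "i < hopdist p m \<longrightarrow> (p ^^ i) m \<in> edges K M"
    proof (induction i)
      case 0 thus ?case using m by (auto simp: UEs_def edges_def)
    next
      case (Suc i)
      show ?case
      proof
        assume a: "Suc i < hopdist p m"
        hence e: "(p ^^ i) m \<in> edges K M" using Suc by simp
        have nz: "(p ^^ Suc i) m \<noteq> 0"
          using not_less_Least[of "Suc i" "\<lambda>n. (p ^^ n) m = 0"] a unfolding hopdist_def by auto
        have "p ((p ^^ i) m) \<in> BSs K" using tree e unfolding is_IAB_tree_def by auto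
        thus "(p ^^ Suc i) m \<in> edges K M" using nz by (auto simp: BSs_def edges_def)
      qed
    qed
  qed
  thus ?thesis unfolding route_def by auto
qed

lemma funpow_period:
  assumes "(p ^^ d) x = x" "d > 0" "\<forall>r<d. (p ^^ r) x \<noteq> (0::nat)"
  shows "(p ^^ n) x \<noteq> 0"
proof (induction n rule: less_induct)
  case (less n)
  show ?case
  proof (cases "n < d")
    case True thus ?thesis using assms by auto
  next
    case False
    hence "(p ^^ n) x = (p ^^ (n - d)) ((p ^^ d) x)"
      by (metis funpow_add le_add_diff_inverse2 not_less comp_apply)
    also have "\<dots> = (p ^^ (n - d)) x" using assms by simp
    finally show ?thesis using less[of "n - d"] assms False by auto
  qed
qed

lemma edge_on_route:
  assumes tree: "is_IAB_tree K M p" and v: "v \<in> edges K M"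
  shows "\<exists>m\<in>UEs K M. v \<in> route p m"
proof (rule ccontr)
  assume H: "\<not> (\<exists>m\<in>UEs K M. v \<in> route p m)"
  define ch where "ch = (\<lambda>k. SOME w. w \<in> edges K M \<and> p w = k)"
  have ch: "ch k \<in> edges K M \<and> p (ch k) = k" if "k \<in> BSs K" for k
  proof -
    have "\<exists>w. w \<in> edges K M \<and> p w = k" using tree that unfolding is_IAB_tree_def by auto
    thus ?thesis unfolding ch_def by (rule someI_ex)
  qed
  define f where "f = rec_nat v (\<lambda>_ x. ch x)"
  have f0: "f 0 = v" and fS: "\<And>i. f (Suc i) = ch (f i)" unfolding f_def by simp_all
  have P: "(\<forall>l\<le>i. f l \<in> edges K M \<and> f l \<notin> UEs K M) \<and> (\<forall>j\<le>i. (p ^^ j) (f i) = f (i - j))" for i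
  proof (induction i)
    case 0
    have "f 0 \<notin> UEs K M"
    proof
      assume u: "f 0 \<in> UEs K M"
      have "(p ^^ 0) (f 0) \<in> route p (f 0)"
        by (rule in_route[OF tree u]) (use v f0 in \<open>auto simp: edges_def\<close>)
      thus False using H u f0 by auto
    qed
    thus ?case using v f0 by auto
  next
    case (Suc i)
    hence e: "f i \<in> edges K M" "f i \<notin> UEs K M"
      and allL: "\<forall>l\<le>i. f l \<in> edges K M \<and> f l \<notin> UEs K M"
      and ch_i: "\<forall>j\<le>i. (p ^^ j) (f i) = f (i - j)" by auto
    have b: "f i \<in> BSs K" using e by (auto simp: edges_def UEs_def BSs_def)
    have e2: "f (Suc i) \<in> edges K M" and pf: "p (f (Suc i)) = f i" using ch[OF b] fS by auto
    have chS: "\<forall>j\<le>Suc i. (p ^^ j) (f (Suc i)) = f (Suc i - j)"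
    proof (intro allI impI)
      fix j assume "j \<le> Suc i"
      thus "(p ^^ j) (f (Suc i)) = f (Suc i - j)"
      proof (cases j)
        case 0 thus ?thesis by simp
      next
        case (Suc j')
        hence "(p ^^ j) (f (Suc i)) = (p ^^ j') (f i)" using pf by (simp only: funpow_Suc_right comp_apply)
        thus ?thesis using ch_i Suc \<open>j \<le> Suc i\<close> by auto
      qed
    qed
    have "f (Suc i) \<notin> UEs K M"
    proof
      assume u: "f (Suc i) \<in> UEs K M"
      have allE: "\<forall>j\<le>Suc i. (p ^^ j) (f (Suc i)) \<in> edges K M"
      proof (intro allI impI)
        fix j assume j: "j \<le> Suc i"
        show "(p ^^ j) (f (Suc i)) \<in> edges K M"
        proof (cases "j = 0")
          case True thus ?thesis using e2 by simp
        next
          case False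
          hence "Suc i - j \<le> i" by simp
          hence "f (Suc i - j) = (p ^^ (i - (Suc i - j))) (f i) \<or> True" by simp
          have "f (Suc i - j) \<in> edges K M"
          proof -
            show ?thesis using allL \<open>Suc i - j \<le> i\<close> by auto
          qed
          thus ?thesis using chS j by auto
        qed
      qed
      have "(p ^^ Suc i) (f (Suc i)) \<in> route p (f (Suc i))"
        by (rule in_route[OF tree u]) (use allE in \<open>auto simp: edges_def\<close>)
      moreover have "(p ^^ Suc i) (f (Suc i)) = f (Suc i - Suc i)" using chS by blast
      hence "(p ^^ Suc i) (f (Suc i)) = v" using f0 by simp
      ultimately show False using H u by auto
    qed
    hence "\<forall>l\<le>Suc i. f l \<in> edges K M \<and> f l \<notin> UEs K M" using e2 allL le_Suc_eq by auto
    with chS show ?case by blast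
  qed
  have rng: "range f \<subseteq> {1..K}"
  proof
    fix x assume "x \<in> range f"
    then obtain i where "x = f i" by auto
    thus "x \<in> {1..K}" using P[of i] by (auto simp: edges_def UEs_def)
  qed
  have "\<not> inj f"
  proof
    assume "inj f"
    moreover have "finite (range f)" using rng finite_subset by blast
    ultimately have "finite (UNIV::nat set)" using finite_imageD by blast
    thus False by simp
  qed
  then obtain a b where ab: "a \<noteq> b" "f a = f b" unfolding inj_def by blast
  obtain i j where ij: "i < j" "f i = f j"
    using ab by (metis linorder_neqE_nat)
  define d where "d = j - i"
  have dpos: "d > 0" using ij d_def by simp
  have "(p ^^ d) (f j) = f (j - d)" using P[of j] d_def by auto
  hence per: "(p ^^ d) (f j) = f j" using ij d_def by simp
  have nz: "\<forall>r<d. (p ^^ r) (f j) \<noteq> 0"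
  proof (intro allI impI)
    fix r assume "r < d"
    hence "(p ^^ r) (f j) = f (j - r)" using P[of j] d_def by auto
    moreover have "f (j - r) \<in> edges K M" using P[of j] by auto
    ultimately show "(p ^^ r) (f j) \<noteq> 0" by (auto simp: edges_def)
  qed
  have "\<exists>n. (p ^^ n) (f j) = 0"
    using tree P[of j] unfolding is_IAB_tree_def edges_def by auto
  thus False using funpow_period[OF per dpos nz] by blast
qed

lemma hcnt_ge1:
  assumes tree: "is_IAB_tree K M p" and m: "m \<in> UEs K M"
  shows "hcnt p m \<ge> 1"
proof -
  have "(p ^^ 0) m \<in> route p m"
    by (rule in_route[OF tree m]) (use m in \<open>auto simp: UEs_def\<close>)
  hence "m \<in> route p m" by simp
  moreover have "finite (route p m)"
    using route_edges[OF tree m] finite_subset by (auto simp: edges_def)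
  ultimately have "card (route p m) \<ge> 1"
    by (metis One_nat_def Suc_leI card_gt_0_iff empty_iff)
  thus ?thesis unfolding hcnt_def by simp
qed

lemma htilde_props:
  assumes tree: "is_IAB_tree K M p" and v: "v \<in> edges K M"
  shows "htilde K M p v \<ge> 1"
    and "\<And>m. m \<in> UEs K M \<Longrightarrow> v \<in> route p m \<Longrightarrow> hcnt p m \<le> htilde K M p v"
    and "\<exists>m\<in>UEs K M. v \<in> route p m \<and> htilde K M p v = hcnt p m"
proof -
  let ?S = "{hcnt p m | m. m \<in> UEs K M \<and> v \<in> route p m}"
  have S: "?S = hcnt p ` {m \<in> UEs K M. v \<in> route p m}" by auto
  have fin: "finite ?S" unfolding S by (auto simp: UEs_def)
  obtain m0 where m0: "m0 \<in> UEs K M" "v \<in> route p m0" using edge_on_route[OF tree v] by blast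
  have ne: "?S \<noteq> {}" using m0 by auto
  show "\<And>m. m \<in> UEs K M \<Longrightarrow> v \<in> route p m \<Longrightarrow> hcnt p m \<le> htilde K M p v"
    unfolding htilde_def using fin by (intro Max_ge) auto
  have "Max ?S \<in> ?S" using fin ne by (rule Max_in)
  thus "\<exists>m\<in>UEs K M. v \<in> route p m \<and> htilde K M p v = hcnt p m" unfolding htilde_def by auto
  have "hcnt p m0 \<le> htilde K M p v" unfolding htilde_def using fin m0 by (intro Max_ge) auto
  thus "htilde K M p v \<ge> 1" using hcnt_ge1[OF tree m0(1)] by simp
qed

lemma Fmul_ge:
  assumes "\<forall>m\<in>UEs K M. lam m \<ge> lmin"
  shows "Fmul K M p lam v \<ge> lmin * Fmul K M p (\<lambda>_. 1) v"
  unfolding Fmul_def sum_distrib_left using assms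
  by (intro sum_mono) (auto simp: Fmat_def)

lemma Fmul_const: "Fmul K M p (\<lambda>_. lmin) v = lmin * Fmul K M p (\<lambda>_. 1) v"
  unfolding Fmul_def sum_distrib_left by (simp add: mult.commute)

lemma Fmul_nn: "Fmul K M p (\<lambda>_. 1) v \<ge> 0"
  unfolding Fmul_def by (intro sum_nonneg) (auto simp: Fmat_def)

theorem theorem1:
  fixes K M :: nat and p :: "nat \<Rightarrow> nat" and c :: "nat \<Rightarrow> real"
    and G :: "nat \<Rightarrow> nat \<Rightarrow> real" and lmin :: real
  assumes tree: "is_IAB_tree K M p"
    and cpos: "\<forall>v\<in>edges K M. c v > 0"
    and G01: "\<forall>k\<in>BSs K. \<forall>v\<in>edges K M. G k v = 0 \<or> G k v = 1"
    and Grow: "\<forall>k\<in>BSs K. \<exists>v\<in>edges K M. G k v = 1"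
    and Gcol: "\<forall>v\<in>edges K M. \<exists>k\<in>BSs K. G k v = 1"
    and lmin_pos: "lmin > 0"
  shows "(tstar K M p c G lmin \<ge> 0 \<longrightarrow>
            (\<exists>lam mu. feasibleP K M p c G lmin (tstar K M p c G lmin) lam mu) \<and>
            (\<forall>t lam mu. feasibleP K M p c G lmin t lam mu \<longrightarrow> t \<le> tstar K M p c G lmin))
       \<and> (tstar K M p c G lmin < 0 \<longrightarrow>
            \<not> (\<exists>t lam mu. feasibleP K M p c G lmin t lam mu))"
proof -
  define E where "E = edges K M"
  define F1 where "F1 = (\<lambda>v. Fmul K M p (\<lambda>_. 1) v)"
  define H where "H = (\<lambda>v. htilde K M p v)"
  define A where "A = (\<lambda>k. \<Sum>v\<in>E. G k v * (1 / c v) * F1 v)"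
  define B where "B = (\<lambda>k. \<Sum>v\<in>E. G k v * (1 / c v) * H v)"
  define T where "T = tstar K M p c G lmin"
  have T_def': "T = Min ((\<lambda>k. (1 - lmin * A k) / B k) ` BSs K)"
    unfolding T_def tstar_def A_def B_def E_def F1_def H_def ..
  have finB: "finite (BSs K)" "BSs K \<noteq> {}" by (auto simp: BSs_def)
  have finE: "finite E" by (simp add: E_def edges_def)
  have H1: "\<And>v. v \<in> E \<Longrightarrow> H v \<ge> 1" unfolding H_def E_def using htilde_props(1)[OF tree] by blast
  have Gnn: "\<And>k v. k \<in> BSs K \<Longrightarrow> v \<in> E \<Longrightarrow> G k v \<ge> 0" using G01 E_def by force
  have cp: "\<And>v. v \<in> E \<Longrightarrow> c v > 0" using cpos E_def by blast
  have F1nn: "\<And>v. F1 v \<ge> 0" unfolding F1_def by (rule Fmul_nn)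
  have Bpos: "B k > 0" if k: "k \<in> BSs K" for k
  proof -
    obtain v where v: "v \<in> E" "G k v = 1" using Grow k E_def by blast
    have "0 < G k v * (1 / c v) * H v" using v H1[OF v(1)] cp[OF v(1)] by simp
    also have "\<dots> \<le> B k" unfolding B_def
    proof (rule member_le_sum)
      fix x assume x: "x \<in> E - {v}"
      have "0 \<le> G k x" "0 \<le> H x" "0 < c x" using Gnn[OF k] H1 cp x by (auto intro: order_trans[OF zero_le_one])
      thus "0 \<le> G k x * (1 / c x) * H x" by simp
    qed (use v finE in auto)
    finally show ?thesis .
  qed
  have lin: "(\<Sum>v\<in>E. G k v * ((lmin * F1 v + t * H v) / c v)) = lmin * A k + t * B k" for k t
    unfolding A_def B_def sum_distrib_left sum.distrib[symmetric]
    by (intro sum.cong) (auto simp: field_simps add_divide_distrib)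
  have upper: "t \<le> T" if f: "feasibleP K M p c G lmin t lam mu" for t lam mu
  proof -
    have bnd: "t \<le> (1 - lmin * A k) / B k" if k: "k \<in> BSs K" for k
    proof -
      have each: "G k v * ((lmin * F1 v + t * H v) / c v) \<le> G k v * mu v" if v: "v \<in> E" for v
      proof -
        obtain m where m: "m \<in> UEs K M" "v \<in> route p m" "H v = hcnt p m"
          using htilde_props(3)[OF tree, of v] v unfolding E_def H_def by blast
        have "c v * mu v - Fmul K M p lam v \<ge> t * H v" using f m unfolding feasibleP_def by auto
        moreover have "Fmul K M p lam v \<ge> lmin * F1 v" using f Fmul_ge unfolding feasibleP_def F1_def by blast
        ultimately have "lmin * F1 v + t * H v \<le> c v * mu v" by linarith
        hence "(lmin * F1 v + t * H v) / c v \<le> mu v" using cp[OF v] by (simp add: divide_le_eq mult.commute)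
        thus ?thesis using Gnn[OF k v] by (rule mult_left_mono)
      qed
      have "lmin * A k + t * B k \<le> (\<Sum>v\<in>E. G k v * mu v)" unfolding lin[symmetric]
        by (rule sum_mono) (rule each)
      also have "\<dots> \<le> 1" using f k unfolding feasibleP_def E_def by auto
      finally have "t * B k \<le> 1 - lmin * A k" by linarith
      thus ?thesis using Bpos[OF k] by (simp add: le_divide_eq)
    qed
    show ?thesis unfolding T_def' using finB bnd by (simp add: Min_ge_iff)
  qed
  have tnn: "t \<ge> 0" if "feasibleP K M p c G lmin t lam mu" for t lam mu
    using that unfolding feasibleP_def by auto
  have feas: "feasibleP K M p c G lmin T (\<lambda>_. lmin) (\<lambda>v. (lmin * F1 v + T * H v) / c v)" if T0: "T \<ge> 0"
  proof -
    define mu where "mu = (\<lambda>v. (lmin * F1 v + T * H v) / c v)"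
    have munn: "mu v \<ge> 0" if "v \<in> E" for v
      unfolding mu_def using cp[OF that] H1[OF that] F1nn[of v] T0 lmin_pos by simp
    have row: "(\<Sum>v\<in>E. G k v * mu v) \<le> 1" if k: "k \<in> BSs K" for k
    proof -
      have "T \<le> (1 - lmin * A k) / B k" unfolding T_def' using finB k by (intro Min_le) auto
      hence "T * B k \<le> 1 - lmin * A k" using Bpos[OF k] by (simp add: le_divide_eq)
      hence "lmin * A k + T * B k \<le> 1" by linarith
      thus ?thesis unfolding mu_def lin .
    qed
    have mu1: "mu v \<le> 1" if v: "v \<in> E" for v
    proof -
      obtain k where k: "k \<in> BSs K" "G k v = 1" using Gcol v E_def by blast
      have "mu v = G k v * mu v" using k by simp
      also have "\<dots> \<le> (\<Sum>v\<in>E. G k v * mu v)"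
        by (rule member_le_sum) (use v finE Gnn[OF k(1)] munn in \<open>auto\<close>)
      also have "\<dots> \<le> 1" by (rule row[OF k(1)])
      finally show ?thesis .
    qed
    have rt: "c v * mu v - Fmul K M p (\<lambda>_. lmin) v \<ge> T * hcnt p m"
      if m: "m \<in> UEs K M" and v: "v \<in> route p m" for m v
    proof -
      have vE': "v \<in> edges K M" using route_edges[OF tree m] v by blast
      hence vE: "v \<in> E" unfolding E_def .
      have cv: "c v > 0" by (rule cp[OF vE])
      have "c v * mu v = lmin * F1 v + T * H v" unfolding mu_def using cv by simp
      moreover have "Fmul K M p (\<lambda>_. lmin) v = lmin * F1 v" unfolding F1_def by (rule Fmul_const)
      ultimately have "c v * mu v - Fmul K M p (\<lambda>_. lmin) v = T * H v" by simp
      moreover have "hcnt p m \<le> H v" unfolding H_def by (rule htilde_props(2)[OF tree vE' m v])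
      moreover have "T * hcnt p m \<le> T * H v" using T0 \<open>hcnt p m \<le> H v\<close> by (rule mult_left_mono[rotated])
      ultimately show ?thesis by linarith
    qed
    have "feasibleP K M p c G lmin T (\<lambda>_. lmin) mu"
      unfolding feasibleP_def
    proof (intro conjI ballI)
      show "0 \<le> T" by (rule T0)
    next
      fix m assume "m \<in> UEs K M" thus "lmin \<le> lmin" by simp
    next
      fix v assume "v \<in> edges K M" thus "0 \<le> mu v" "mu v \<le> 1" using munn mu1 E_def by auto
    next
      fix k assume "k \<in> BSs K" thus "(\<Sum>v\<in>edges K M. G k v * mu v) \<le> 1" using row E_def by blast
    next
      fix m v assume "m \<in> UEs K M" "v \<in> route p m"
      thus "T * hcnt p m \<le> c v * mu v - Fmul K M p (\<lambda>_. lmin) v" by (rule rt)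
    qed
    thus ?thesis unfolding mu_def .
  qed
  have c1: "(\<exists>lam mu. feasibleP K M p c G lmin T lam mu) \<and>
      (\<forall>t lam mu. feasibleP K M p c G lmin t lam mu \<longrightarrow> t \<le> T)" if "0 \<le> T"
    using feas[OF that] upper by blast
  have c2: "\<not> (\<exists>t lam mu. feasibleP K M p c G lmin t lam mu)" if "T < 0"
    using upper tnn that by force
  show ?thesis unfolding T_def[symmetric] using c1 c2 by blast
qed

end
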